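(* Fix $n\ge1$ and $r\in[n]$. For each permutation $\pi$ of $[n]$ define the polynomial in the $n^2$ variables $x=[x_{i,j}]$ $$P_\pi(x)=\prod_{i=1}^n x_{i,\pi(i)}\sum_{T\in\mathcal{T}_r(n)}\prod_{(u,v)\in T}x_{u,\pi(v)}.$$ Then for every $x\in\mathcal{B}_n$, $$\sum_{\pi\in S_n}(\pi-x)\,P_\pi(x)=0,$$ where each permutation $\pi$ is identified with its $n\times n$ permutation matrix (entry $(i,j)$ equal to $1$ if $j=\pi(i)$ and $0$ otherwise).
   Context: $S_n$ is the set of permutations of $[n]$. $\mathcal{B}_n$ is the set of $n\times n$ doubly stochastic matrices (nonnegative entries, rows and columns summing to $1$). An arborescence rooted at $r$ on vertex set $[n]$ is a set $T$ of directed edges $(u,v)$ (meaning $u\to v$) on $[n]$ such that from every vertex there is exactly one directed path to $r$; $\mathcal{T}_r(n)$ is the set of all such arborescences. *)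

theory Defs
  imports Complex_Main "HOL-Combinatorics.Permutations"
begin

text \<open>Matrices are functions nat => nat => real, indexed by [n] = {1..n}.\<close>

definition doubly_stochastic :: "nat \<Rightarrow> (nat \<Rightarrow> nat \<Rightarrow> real) \<Rightarrow> bool" where
  "doubly_stochastic n x \<longleftrightarrow>
     (\<forall>i\<in>{1..n}. \<forall>j\<in>{1..n}. x i j \<ge> 0) \<and>
     (\<forall>i\<in>{1..n}. (\<Sum>j\<in>{1..n}. x i j) = 1) \<and>
     (\<forall>j\<in>{1..n}. (\<Sum>i\<in>{1..n}. x i j) = 1)"

definition is_walk :: "(nat \<times> nat) set \<Rightarrow> nat \<Rightarrow> nat \<Rightarrow> nat list \<Rightarrow> bool" where
  "is_walk T v w ps \<longleftrightarrow> ps \<noteq> [] \<and> hd ps = v \<and> last ps = w \<and>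
     successively (\<lambda>a b. (a, b) \<in> T) ps"

definition arborescence :: "nat \<Rightarrow> nat \<Rightarrow> (nat \<times> nat) set \<Rightarrow> bool" where
  "arborescence n r T \<longleftrightarrow> T \<subseteq> {1..n} \<times> {1..n} \<and>
     (\<forall>v\<in>{1..n}. \<exists>!ps. is_walk T v r ps)"

definition perm_matrix :: "(nat \<Rightarrow> nat) \<Rightarrow> nat \<Rightarrow> nat \<Rightarrow> real" where
  "perm_matrix \<pi> i j = (if j = \<pi> i then 1 else 0)"

definition P_poly :: "nat \<Rightarrow> nat \<Rightarrow> (nat \<Rightarrow> nat) \<Rightarrow> (nat \<Rightarrow> nat \<Rightarrow> real) \<Rightarrow> real" where
  "P_poly n r \<pi> x = (\<Prod>i\<in>{1..n}. x i (\<pi> i)) *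
     (\<Sum>T\<in>{T. arborescence n r T}. \<Prod>(u, v)\<in>T. x u (\<pi> v))"

end

theory Submission
  imports Defs
begin



definition reach :: "(nat\<Rightarrow>nat) \<Rightarrow> nat set \<Rightarrow> nat \<Rightarrow> bool" where
  "reach p V s \<longleftrightarrow> (\<forall>u\<in>V. \<exists>k. (p^^k) u = s)"

definition FF :: "nat set \<Rightarrow> nat \<Rightarrow> (nat\<Rightarrow>nat) set" where
  "FF V s = {p \<in> V \<rightarrow>\<^sub>E V. p s = s \<and> reach p V s}"

definition edges :: "nat set \<Rightarrow> nat \<Rightarrow> (nat\<Rightarrow>nat) \<Rightarrow> (nat\<times>nat) set" where
  "edges V s p = (\<lambda>u. (u, p u)) ` (V - {s})"

lemma ex1_eq: "\<exists>!x. P x \<Longrightarrow> P a \<Longrightarrow> P b \<Longrightarrow> a = b"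
  by blast

lemma is_walk_single: "is_walk T v w [a] \<longleftrightarrow> a = v \<and> v = w"
  by (auto simp: is_walk_def)

lemma is_walk_cons2: "is_walk T v w (a # b # rest) \<longleftrightarrow> a = v \<and> (v,b) \<in> T \<and> is_walk T b w (b # rest)"
  by (auto simp: is_walk_def)

lemma walk_unique:
  assumes "s \<in> V"
  shows "is_walk (edges V s p) v s ps1 \<Longrightarrow> is_walk (edges V s p) v s ps2 \<Longrightarrow> ps1 = ps2"
proof (induction ps1 arbitrary: v ps2)
  case Nil
  then show ?case by (simp add: is_walk_def)
next
  case (Cons a rest)
  have av: "a = v" using Cons.prems by (simp add: is_walk_def)
  show ?case
  proof (cases "v = s")
    case True
    have r1: "rest = []"
    proof (rule ccontr)
      assume "rest \<noteq> []"
      then obtain b r where "rest = b # r" by (cases rest) auto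
      then have "(v,b) \<in> edges V s p" using Cons.prems(1) av by (simp add: is_walk_cons2)
      then show False using True by (auto simp: edges_def)
    qed
    obtain c r2 where ps2: "ps2 = c # r2" using Cons.prems(2) by (cases ps2) (auto simp: is_walk_def)
    have "r2 = []"
    proof (rule ccontr)
      assume "r2 \<noteq> []"
      then obtain b r where "r2 = b # r" by (cases r2) auto
      then have "(v,b) \<in> edges V s p" using Cons.prems(2) ps2 by (simp add: is_walk_cons2)
      then show False using True by (auto simp: edges_def)
    qed
    then show ?thesis using r1 ps2 av Cons.prems(2) by (simp add: is_walk_def)
  next
    case False
    obtain b r where rest: "rest = b # r" using Cons.prems(1) False av
      by (cases rest) (auto simp: is_walk_def)
    obtain c r2 where ps2: "ps2 = c # r2" using Cons.prems(2) by (cases ps2) (auto simp: is_walk_def)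
    obtain b2 r2' where r2: "r2 = b2 # r2'" using Cons.prems(2) False ps2
      by (cases r2) (auto simp: is_walk_def)
    have e1: "(v,b) \<in> edges V s p" and w1: "is_walk (edges V s p) b s (b # r)"
      using Cons.prems(1) av rest by (simp_all add: is_walk_cons2)
    have e2: "(v,b2) \<in> edges V s p" and w2: "is_walk (edges V s p) b2 s (b2 # r2')"
      using Cons.prems(2) ps2 r2 by (simp_all add: is_walk_cons2)
    have "b = p v" "b2 = p v" using e1 e2 by (auto simp: edges_def)
    then have "b # r = b2 # r2'" using Cons.IH[of b "b2 # r2'"] w1 w2 rest by simp
    then show ?thesis using rest ps2 r2 av Cons.prems(2) by (simp add: is_walk_def)
  qed
qed

lemma walk_exists:
  assumes "p \<in> V \<rightarrow>\<^sub>E V" "s \<in> V"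
  shows "v \<in> V \<Longrightarrow> (p^^k) v = s \<Longrightarrow> \<exists>ps. is_walk (edges V s p) v s ps"
proof (induction k arbitrary: v)
  case 0
  then show ?case by (intro exI[of _ "[s]"]) (simp add: is_walk_def)
next
  case (Suc k)
  show ?case
  proof (cases "v = s")
    case True
    then show ?thesis by (intro exI[of _ "[s]"]) (simp add: is_walk_def)
  next
    case False
    have "p v \<in> V" using assms(1) Suc.prems(1) by auto
    moreover have "(p^^k) (p v) = s" using Suc.prems(2) by (simp add: funpow_Suc_right del: funpow.simps)
    ultimately obtain ps where ps: "is_walk (edges V s p) (p v) s ps" using Suc.IH by blast
    then obtain r where "ps = p v # r" by (cases ps) (auto simp: is_walk_def)
    moreover have "(v, p v) \<in> edges V s p" using False Suc.prems(1) by (auto simp: edges_def)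
    ultimately have "is_walk (edges V s p) v s (v # ps)" using ps by (simp add: is_walk_cons2)
    then show ?thesis by blast
  qed
qed

lemma FF_arb:
  assumes "p \<in> FF {1..n} s" "s \<in> {1..n}"
  shows "arborescence n s (edges {1..n} s p)"
proof -
  have pV: "p \<in> {1..n} \<rightarrow>\<^sub>E {1..n}" and r: "reach p {1..n} s" using assms(1) by (auto simp: FF_def)
  have "edges {1..n} s p \<subseteq> {1..n} \<times> {1..n}" using pV by (auto simp: edges_def)
  moreover have "\<exists>!ps. is_walk (edges {1..n} s p) v s ps" if "v \<in> {1..n}" for v
  proof -
    note vV = that
    from r that obtain k where "(p^^k) v = s" unfolding reach_def by blast
    then obtain ps where "is_walk (edges {1..n} s p) v s ps" using walk_exists[OF pV assms(2) vV] by blast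
    then show ?thesis using walk_unique[OF assms(2)] by blast
  qed
  ultimately show ?thesis by (simp add: arborescence_def)
qed

lemma walk_funpow:
  assumes "\<forall>(a,b)\<in>T. p a = b"
  shows "is_walk T v w ps \<Longrightarrow> (p^^(length ps - 1)) v = w"
proof (induction ps arbitrary: v)
  case Nil
  then show ?case by (simp add: is_walk_def)
next
  case (Cons a rest)
  show ?case
  proof (cases rest)
    case Nil
    then show ?thesis using Cons.prems by (simp add: is_walk_def)
  next
    case (Cons b r)
    have "a = v" "(v,b) \<in> T" "is_walk T b w rest"
      using Cons.prems \<open>rest = b # r\<close> by (simp_all add: is_walk_cons2)
    then have "p v = b" "(p^^(length rest - 1)) b = w" using assms Cons.IH by auto
    then show ?thesis using \<open>rest = b # r\<close> by (simp add: funpow_Suc_right del: funpow.simps)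
  qed
qed

lemma arb_FF:
  assumes "arborescence n s T" "s \<in> {1..n}"
  shows "\<exists>p\<in>FF {1..n} s. T = edges {1..n} s p"
proof -
  let ?V = "{1..n::nat}"
  have TV: "T \<subseteq> ?V \<times> ?V" and W: "\<And>v. v \<in> ?V \<Longrightarrow> \<exists>!ps. is_walk T v s ps"
    using assms(1) by (auto simp: arborescence_def)
  have uniq: "a = b" if "(u,a) \<in> T" "(u,b) \<in> T" for u a b
  proof -
    have "a \<in> ?V" "b \<in> ?V" "u \<in> ?V" using TV that by auto
    then obtain wa wb where wa: "is_walk T a s wa" and wb: "is_walk T b s wb" using W by blast
    obtain ra where ra: "wa = a # ra" using wa by (cases wa) (auto simp: is_walk_def)
    obtain rb where rb: "wb = b # rb" using wb by (cases wb) (auto simp: is_walk_def)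
    have "is_walk T u s (u # wa)" "is_walk T u s (u # wb)"
      using wa wb ra rb that by (simp_all add: is_walk_cons2)
    then have "u # wa = u # wb" using ex1_eq[OF W[OF \<open>u \<in> ?V\<close>]] by blast
    then show ?thesis using ra rb by simp
  qed
  have nos: "(s,a) \<notin> T" for a
  proof
    assume st: "(s,a) \<in> T"
    then have "a \<in> ?V" using TV by auto
    then obtain wa where wa: "is_walk T a s wa" using W by blast
    obtain ra where ra: "wa = a # ra" using wa by (cases wa) (auto simp: is_walk_def)
    have "is_walk T s s (s # wa)" using wa ra st by (simp add: is_walk_cons2)
    moreover have "is_walk T s s [s]" by (simp add: is_walk_def)
    ultimately have "s # wa = [s]" using ex1_eq[OF W[OF assms(2)]] by blast
    then show False using ra by simp
  qed
  have ex: "\<exists>b. (u,b) \<in> T" if uV: "u \<in> ?V" "u \<noteq> s" for u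
  proof -
    obtain ps where ps: "is_walk T u s ps" using W uV by blast
    obtain r where "ps = u # r" using ps by (cases ps) (auto simp: is_walk_def)
    moreover have "r \<noteq> []" using ps uV \<open>ps = u # r\<close> by (auto simp: is_walk_def)
    ultimately obtain b r' where "ps = u # b # r'" by (cases r) auto
    then show ?thesis using ps by (auto simp: is_walk_cons2)
  qed
  define p where "p = restrict (\<lambda>u. if u = s then s else (THE b. (u,b) \<in> T)) ?V"
  have pu: "p u = b" if "(u,b) \<in> T" for u b
  proof -
    have uV: "u \<in> ?V" using that TV by blast
    have "u \<noteq> s" using that nos by blast
    note uV = uV this
    have "(THE b. (u,b) \<in> T) = b" by (rule the_equality[where P="\<lambda>b. (u,b) \<in> T", OF that]) (rule uniq[OF _ that])
    then show ?thesis using uV unfolding p_def by simp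
  qed
  have pV: "p \<in> ?V \<rightarrow>\<^sub>E ?V"
  proof
    fix u assume u: "u \<in> ?V"
    show "p u \<in> ?V"
    proof (cases "u = s")
      case True then show ?thesis using assms(2) u by (simp add: p_def)
    next
      case False
      then obtain b where "(u,b) \<in> T" using ex u by blast
      then show ?thesis using pu TV by auto
    qed
  next
    fix u assume "u \<notin> ?V" then show "p u = undefined" by (auto simp: p_def)
  qed
  have Te: "T = edges ?V s p"
  proof
    show "T \<subseteq> edges ?V s p"
    proof
      fix e assume e: "e \<in> T"
      obtain u b where ub: "e = (u,b)" by (cases e)
      have "u \<in> ?V" "u \<noteq> s" "p u = b" using e ub pu[of u b] TV nos[of b] by auto
      then show "e \<in> edges ?V s p" unfolding edges_def ub by (intro image_eqI[of _ _ u]) auto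
    qed
  next
    show "edges ?V s p \<subseteq> T"
    proof
      fix e assume "e \<in> edges ?V s p"
      then obtain u where u: "u \<in> ?V" "u \<noteq> s" "e = (u, p u)" unfolding edges_def by blast
      then obtain b where "(u,b) \<in> T" using ex by blast
      then show "e \<in> T" using pu u by auto
    qed
  qed
  have "reach p ?V s"
    unfolding reach_def
  proof
    fix u assume "u \<in> ?V"
    then obtain ps where "is_walk T u s ps" using W by blast
    moreover have "\<forall>(a,b)\<in>T. p a = b" using pu by blast
    ultimately have "(p^^(length ps - 1)) u = s" using walk_funpow[of T p] by blast
    then show "\<exists>k. (p^^k) u = s" by blast
  qed
  moreover have "p s = s" using assms(2) by (simp add: p_def)
  ultimately have "p \<in> FF ?V s" using pV unfolding FF_def by blast
  then show ?thesis using Te by blast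
qed

lemma edges_inj: "inj_on (edges V s) (FF V s)"
proof (rule inj_onI)
  fix p q assume p: "p \<in> FF V s" and q: "q \<in> FF V s" and e: "edges V s p = edges V s q"
  show "p = q"
  proof
    fix u
    show "p u = q u"
    proof (cases "u \<in> V - {s}")
      case True
      then have "(u, p u) \<in> edges V s p" unfolding edges_def by (rule imageI)
      then have "(u, p u) \<in> (\<lambda>u. (u, q u)) ` (V - {s})" using e unfolding edges_def by simp
      then obtain w where "(u, p u) = (w, q w)" by (rule imageE)
      then show ?thesis by (metis prod.inject)
    next
      case False
      show ?thesis
      proof (cases "u = s")
        case True
        have "p s = s" "q s = s" using p q unfolding FF_def by auto
        then show ?thesis using True by simp
      next
        case False then have "u \<notin> V" using \<open>u \<notin> V - {s}\<close> by blast
        have "p \<in> V \<rightarrow>\<^sub>E V" "q \<in> V \<rightarrow>\<^sub>E V" using p q unfolding FF_def by auto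
        then show ?thesis using PiE_arb[of p V "\<lambda>_. V" u] PiE_arb[of q V "\<lambda>_. V" u] \<open>u \<notin> V\<close> by simp
      qed
    qed
  qed
qed

lemma arb_sum:
  assumes "s \<in> {1..n}"
  shows "(\<Sum>T\<in>{T. arborescence n s T}. \<Prod>(u, v)\<in>T. f u v)
       = (\<Sum>p\<in>FF {1..n} s. \<Prod>u\<in>{1..n}-{s}. f u (p u))"
proof -
  have img: "{T. arborescence n s T} = edges {1..n} s ` FF {1..n} s"
  proof
    show "{T. arborescence n s T} \<subseteq> edges {1..n} s ` FF {1..n} s"
    proof
      fix T assume "T \<in> {T. arborescence n s T}"
      then obtain p where "p \<in> FF {1..n} s" "T = edges {1..n} s p" using arb_FF[OF _ assms] by blast
      then show "T \<in> edges {1..n} s ` FF {1..n} s" by blast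
    qed
  next
    show "edges {1..n} s ` FF {1..n} s \<subseteq> {T. arborescence n s T}"
      using FF_arb[OF _ assms] by blast
  qed
  have "(\<Sum>T\<in>{T. arborescence n s T}. \<Prod>(u, v)\<in>T. f u v)
      = (\<Sum>p\<in>FF {1..n} s. \<Prod>(u, v)\<in>edges {1..n} s p. f u v)"
    unfolding img by (rule sum.reindex[OF edges_inj, unfolded comp_def])
  also have "\<dots> = (\<Sum>p\<in>FF {1..n} s. \<Prod>u\<in>{1..n}-{s}. f u (p u))"
  proof (rule sum.cong[OF refl])
    fix p :: "nat \<Rightarrow> nat"
    have inj: "inj_on (\<lambda>u. (u, p u)) ({1..n} - {s})" by (simp add: inj_on_def)
    show "(\<Prod>(u, v)\<in>edges {1..n} s p. f u v) = (\<Prod>u\<in>{1..n}-{s}. f u (p u))"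
      unfolding edges_def by (subst prod.reindex[OF inj]) (simp add: comp_def)
  qed
  finally show ?thesis .
qed




definition AA :: "nat set \<Rightarrow> (nat\<Rightarrow>nat\<Rightarrow>real) \<Rightarrow> nat \<Rightarrow> real" where
  "AA V Q s = (\<Sum>p\<in>FF V s. \<Prod>u\<in>V-{s}. Q u (p u))"

definition GG :: "nat set \<Rightarrow> nat \<Rightarrow> (nat\<Rightarrow>nat) set" where
  "GG V v = {g \<in> V \<rightarrow>\<^sub>E V. reach g V v}"

definition wt :: "nat set \<Rightarrow> (nat\<Rightarrow>nat\<Rightarrow>real) \<Rightarrow> (nat\<Rightarrow>nat) \<Rightarrow> real" where
  "wt V Q g = (\<Prod>u\<in>V. Q u (g u))"

lemma reach_agree:
  assumes "\<And>x. x \<noteq> t \<Longrightarrow> h x = f x"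
  shows "(f^^k) u = t \<Longrightarrow> \<exists>k'. (h^^k') u = t"
proof (induction k arbitrary: u)
  case 0
  then show ?case by (intro exI[of _ 0]) simp
next
  case (Suc k)
  show ?case
  proof (cases "u = t")
    case True
    then show ?thesis by (intro exI[of _ 0]) simp
  next
    case False
    have "(f^^k) (f u) = t" using Suc.prems by (simp add: funpow_Suc_right del: funpow.simps)
    then obtain k' where "(h^^k') (f u) = t" using Suc.IH by blast
    then have "(h^^(Suc k')) u = t" using assms[OF False] by (simp add: funpow_Suc_right del: funpow.simps)
    then show ?thesis by blast
  qed
qed

lemma funpow_in: "f \<in> V \<rightarrow>\<^sub>E V \<Longrightarrow> u \<in> V \<Longrightarrow> (f^^k) u \<in> V"
  by (induction k) auto

lemma finite_FF: "finite V \<Longrightarrow> finite (FF V s)"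
  unfolding FF_def by (rule finite_subset[of _ "V \<rightarrow>\<^sub>E V"]) (auto intro: finite_PiE)

lemma finite_GG: "finite V \<Longrightarrow> finite (GG V v)"
  unfolding GG_def by (rule finite_subset[of _ "V \<rightarrow>\<^sub>E V"]) (auto intro: finite_PiE)

lemma wt_upd:
  assumes "finite V" "v \<in> V"
  shows "wt V Q (p(v:=w)) = Q v w * (\<Prod>u\<in>V-{v}. Q u (p u))"
proof -
  have "wt V Q (p(v:=w)) = Q v w * (\<Prod>u\<in>V-{v}. Q u ((p(v:=w)) u))"
    unfolding wt_def using prod.remove[OF assms, of "\<lambda>u. Q u ((p(v:=w)) u)"] by simp
  also have "(\<Prod>u\<in>V-{v}. Q u ((p(v:=w)) u)) = (\<Prod>u\<in>V-{v}. Q u (p u))"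
    by (rule prod.cong) auto
  finally show ?thesis .
qed

lemma identity2:
  assumes fin: "finite V" and vV: "v \<in> V"
  shows "AA V Q v * (\<Sum>w\<in>V. Q v w) = (\<Sum>g\<in>GG V v. wt V Q g)"
proof -
  have "AA V Q v * (\<Sum>w\<in>V. Q v w) = (\<Sum>w\<in>V. \<Sum>p\<in>FF V v. wt V Q (p(v:=w)))"
    unfolding AA_def sum_distrib_right sum_distrib_left
    by (simp add: wt_upd[OF fin vV] mult.commute)
  also have "\<dots> = (\<Sum>(w,p)\<in>V \<times> FF V v. wt V Q (p(v:=w)))"
    by (rule sum.cartesian_product)
  also have "\<dots> = (\<Sum>g\<in>GG V v. wt V Q g)"
  proof (rule sum.reindex_bij_witness[where i="\<lambda>g. (g v, g(v:=v))" and j="\<lambda>(w,p). p(v:=w)"])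
    fix a assume a: "a \<in> V \<times> FF V v"
    obtain w p where wp: "a = (w,p)" by (cases a)
    then have w: "w \<in> V" and p: "p \<in> FF V v" using a by auto
    have pv: "p v = v" using p by (simp add: FF_def)
    show "(case (case a of (w, p) \<Rightarrow> p(v := w)) of g \<Rightarrow> (g v, g(v := v))) = a"
      using wp pv by (auto simp: fun_upd_def)
    have pE: "p \<in> V \<rightarrow>\<^sub>E V" and pr: "reach p V v" using p by (auto simp: FF_def)
    have "p(v:=w) \<in> V \<rightarrow>\<^sub>E V" using pE w vV by (auto simp: PiE_def extensional_def)
    moreover have "reach (p(v:=w)) V v"
      unfolding reach_def
    proof
      fix u assume "u \<in> V"
      then obtain k where "(p^^k) u = v" using pr unfolding reach_def by blast
      then show "\<exists>k. ((p(v:=w))^^k) u = v" by (rule reach_agree[rotated]) simp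
    qed
    ultimately show "(case a of (w, p) \<Rightarrow> p(v := w)) \<in> GG V v" using wp by (simp add: GG_def)
    show "wt V Q (case a of (w, p) \<Rightarrow> p(v := w)) = (case a of (w, p) \<Rightarrow> wt V Q (p(v := w)))"
      using wp by simp
  next
    fix g assume g: "g \<in> GG V v"
    have gE: "g \<in> V \<rightarrow>\<^sub>E V" and gr: "reach g V v" using g by (auto simp: GG_def)
    show "(case (g v, g(v := v)) of (w, p) \<Rightarrow> p(v := w)) = g" by simp
    have "g v \<in> V" using gE vV by auto
    moreover have "g(v:=v) \<in> V \<rightarrow>\<^sub>E V" using gE vV by (auto simp: PiE_def extensional_def)
    moreover have "reach (g(v:=v)) V v"
      unfolding reach_def
    proof
      fix u assume "u \<in> V"
      then obtain k where "(g^^k) u = v" using gr unfolding reach_def by blast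
      then show "\<exists>k. ((g(v:=v))^^k) u = v" by (rule reach_agree[rotated]) simp
    qed
    ultimately show "(g v, g(v := v)) \<in> V \<times> FF V v" by (simp add: FF_def)
  qed
  finally show ?thesis .
qed

lemma funpow_period:
  assumes "(g^^c) v = v"
  shows "(g^^(q*c + r)) v = (g^^r) v"
proof (induction q)
  case 0 then show ?case by simp
next
  case (Suc q)
  have "(g^^(Suc q * c + r)) v = (g^^((q*c + r) + c)) v"
    by (simp add: algebra_simps)
  also have "\<dots> = (g^^(q*c + r)) ((g^^c) v)"
    by (simp only: funpow_add comp_apply)
  also have "\<dots> = (g^^(q*c + r)) v" using assms by simp
  also have "\<dots> = (g^^r) v" by (rule Suc)
  finally show ?case .
qed

lemma cycle_pred_unique:
  assumes "g s = v" "g s' = v" "(g^^a) v = s" "(g^^b) v = s'"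
  shows "s = s'"
proof -
  have c: "(g^^(Suc a)) v = v" using assms(1,3) by simp
  have d: "(g^^(Suc b)) v = v" using assms(2,4) by simp
  have e: "b * Suc a + a = a * Suc b + b" by (simp add: algebra_simps)
  have "s = (g^^(b * Suc a + a)) v" using funpow_period[OF c, of b a] assms(3) by simp
  also have "\<dots> = (g^^(a * Suc b + b)) v" by (simp only: e)
  also have "\<dots> = s'" using funpow_period[OF d, of a b] assms(4) by simp
  finally show ?thesis .
qed

lemma identity1:
  assumes fin: "finite V" and vV: "v \<in> V"
  shows "(\<Sum>s\<in>V. AA V Q s * Q s v) = (\<Sum>g\<in>GG V v. wt V Q g)"
proof -
  define H where "H s = (\<lambda>p. p(s:=v)) ` FF V s" for s
  have Hs: "AA V Q s * Q s v = (\<Sum>g\<in>H s. wt V Q g)" if sV: "s \<in> V" for s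
  proof -
    have inj: "inj_on (\<lambda>p. p(s:=v)) (FF V s)"
    proof (rule inj_onI)
      fix p q assume "p \<in> FF V s" "q \<in> FF V s" "p(s:=v) = q(s:=v)"
      then have "p s = s" "q s = s" "\<And>x. x \<noteq> s \<Longrightarrow> p x = q x"
        by (auto simp: FF_def fun_upd_def fun_eq_iff split: if_splits)
      then show "p = q" by (metis ext)
    qed
    have "AA V Q s * Q s v = (\<Sum>p\<in>FF V s. wt V Q (p(s:=v)))"
      unfolding AA_def sum_distrib_right by (simp add: wt_upd[OF fin sV] mult.commute)
    also have "\<dots> = (\<Sum>g\<in>H s. wt V Q g)"
      unfolding H_def by (simp add: sum.reindex[OF inj])
    finally show ?thesis .
  qed
  have Hsub: "H s \<subseteq> GG V v" and Hpred: "\<forall>g\<in>H s. g s = v \<and> (\<exists>k. (g^^k) v = s)" if sV: "s \<in> V" for s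
  proof -
    have "g \<in> GG V v \<and> g s = v \<and> (\<exists>k. (g^^k) v = s)" if "g \<in> H s" for g
    proof -
      obtain p where p: "p \<in> FF V s" and gp: "g = p(s:=v)" using \<open>g \<in> H s\<close> unfolding H_def by blast
      have pE: "p \<in> V \<rightarrow>\<^sub>E V" and pr: "reach p V s" using p by (auto simp: FF_def)
      have gE: "g \<in> V \<rightarrow>\<^sub>E V" using pE vV sV gp by (auto simp: PiE_def extensional_def)
      have rs: "\<exists>k. (g^^k) u = s" if "u \<in> V" for u
      proof -
        obtain k where "(p^^k) u = s" using pr \<open>u \<in> V\<close> unfolding reach_def by blast
        then show ?thesis by (rule reach_agree[rotated]) (simp add: gp)
      qed
      have "reach g V v"
        unfolding reach_def
      proof
        fix u assume "u \<in> V"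
        then obtain k where "(g^^k) u = s" using rs by blast
        then have "(g^^(Suc k)) u = v" using gp by simp
        then show "\<exists>k. (g^^k) u = v" by blast
      qed
      then show ?thesis using gE rs[OF vV] gp by (simp add: GG_def)
    qed
    then show "H s \<subseteq> GG V v" "\<forall>g\<in>H s. g s = v \<and> (\<exists>k. (g^^k) v = s)" by blast+
  qed
  have disj: "H s \<inter> H s' = {}" if ss: "s \<in> V" "s' \<in> V" "s \<noteq> s'" for s s'
  proof (rule ccontr)
    assume "H s \<inter> H s' \<noteq> {}"
    then obtain g where g1: "g \<in> H s" and g2: "g \<in> H s'" by blast
    have "g s = v \<and> (\<exists>k. (g^^k) v = s)" using Hpred[OF ss(1)] g1 by blast
    then obtain a where a1: "g s = v" and a2: "(g^^a) v = s" by blast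
    have "g s' = v \<and> (\<exists>k. (g^^k) v = s')" using Hpred[OF ss(2)] g2 by blast
    then obtain b where b1: "g s' = v" and b2: "(g^^b) v = s'" by blast
    have "s = s'" by (rule cycle_pred_unique[OF a1 b1 a2 b2])
    then show False using ss(3) by simp
  qed
  have cover: "GG V v \<subseteq> (\<Union>s\<in>V. H s)"
  proof
    fix g assume g: "g \<in> GG V v"
    have gE: "g \<in> V \<rightarrow>\<^sub>E V" and gr: "reach g V v" using g by (auto simp: GG_def)
    have "g v \<in> V" using gE vV by auto
    then obtain k0 where "(g^^k0) (g v) = v" using gr unfolding reach_def by blast
    then have ex: "\<exists>m. 0 < m \<and> (g^^m) v = v"
      by (intro exI[of _ "Suc k0"]) (simp add: funpow_Suc_right del: funpow.simps)
    define m where "m = (LEAST m. 0 < m \<and> (g^^m) v = v)"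
    have m: "0 < m" "(g^^m) v = v" using LeastI_ex[OF ex] unfolding m_def by auto
    define s where "s = (g^^(m-1)) v"
    have sV: "s \<in> V" unfolding s_def by (rule funpow_in[OF gE vV])
    have gs: "g s = v" using m unfolding s_def
      by (metis Suc_diff_1 comp_apply funpow.simps(2))
    define p where "p = g(s:=s)"
    have "p \<in> V \<rightarrow>\<^sub>E V" using gE sV unfolding p_def by (auto simp: PiE_def extensional_def)
    moreover have "p s = s" unfolding p_def by simp
    moreover have "reach p V s"
      unfolding reach_def
    proof
      fix u assume "u \<in> V"
      then obtain k where "(g^^k) u = v" using gr unfolding reach_def by blast
      then have "(g^^(m - 1 + k)) u = s" unfolding s_def by (simp add: funpow_add)
      then show "\<exists>k. (p^^k) u = s" by (rule reach_agree[rotated]) (simp add: p_def)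
    qed
    ultimately have "p \<in> FF V s" by (simp add: FF_def)
    moreover have "g = p(s:=v)" unfolding p_def using gs by auto
    ultimately have "g \<in> H s" unfolding H_def by blast
    then show "g \<in> (\<Union>s\<in>V. H s)" using sV by blast
  qed
  have Heq: "(\<Union>s\<in>V. H s) = GG V v" using cover Hsub by blast
  have finH: "finite (H s)" for s unfolding H_def using finite_FF[OF fin] by blast
  have "(\<Sum>s\<in>V. AA V Q s * Q s v) = (\<Sum>s\<in>V. \<Sum>g\<in>H s. wt V Q g)"
    by (rule sum.cong) (auto simp: Hs)
  also have "\<dots> = (\<Sum>g\<in>(\<Union>s\<in>V. H s). wt V Q g)"
    by (rule sum.UNION_disjoint[symmetric]) (use fin finH disj in auto)
  finally show ?thesis unfolding Heq .
qed

lemma tree_thm: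
  assumes "finite V" "v \<in> V"
  shows "(\<Sum>s\<in>V. AA V Q s * Q s v) = AA V Q v * (\<Sum>w\<in>V. Q v w)"
  using identity1[OF assms] identity2[OF assms] by simp




lemma crossing:
  "\<not> P ((f^^0) w) \<Longrightarrow> P ((f^^k) w) \<Longrightarrow> \<exists>i. \<not> P ((f^^i) w) \<and> P ((f^^Suc i) w)"
proof (induction k)
  case 0 then show ?case by simp
next
  case (Suc k)
  then show ?case by blast
qed

lemma AA_nonneg:
  assumes "\<forall>u\<in>V. \<forall>v\<in>V. Q u v \<ge> 0"
  shows "AA V Q s \<ge> 0"
  unfolding AA_def
proof (rule sum_nonneg, rule prod_nonneg)
  fix p u assume "p \<in> FF V s" "u \<in> V - {s}"
  then have "u \<in> V" "p u \<in> V" by (auto simp: FF_def)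
  then show "Q u (p u) \<ge> 0" using assms by blast
qed

lemma root_indep:
  assumes fin: "finite V"
    and nn: "\<forall>u\<in>V. \<forall>v\<in>V. Q u v \<ge> 0"
    and rs: "\<forall>u\<in>V. (\<Sum>v\<in>V. Q u v) = 1"
    and cs: "\<forall>v\<in>V. (\<Sum>u\<in>V. Q u v) = 1"
    and sV: "s \<in> V" and tV: "t \<in> V"
  shows "AA V Q s = AA V Q t"
proof -
  let ?A = "AA V Q"
  have Anng: "?A x \<ge> 0" for x using AA_nonneg[OF nn] .
  have stat: "?A v = (\<Sum>u\<in>V. ?A u * Q u v)" if "v \<in> V" for v
    using tree_thm[OF fin that, of Q] rs that by simp
  have ne: "V \<noteq> {}" using sV by blast
  define m where "m = Max (?A ` V)"
  have le: "?A v \<le> m" if "v \<in> V" for v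
    unfolding m_def using fin that by (intro Max_ge) auto
  have "m \<in> ?A ` V" unfolding m_def using fin ne by (intro Max_in) auto
  then obtain r where rV: "r \<in> V" and Ar: "?A r = m" by blast
  have zero: "Q a b = 0" if ab: "a \<in> V" "b \<in> V" "?A b = m" "?A a < m" for a b
  proof -
    have "(\<Sum>u\<in>V. (m - ?A u) * Q u b) = m * (\<Sum>u\<in>V. Q u b) - (\<Sum>u\<in>V. ?A u * Q u b)"
      by (simp add: algebra_simps sum_subtractf sum_distrib_left)
    also have "\<dots> = 0" using cs stat[OF ab(2)] ab(2,3) by simp
    finally have s0: "(\<Sum>u\<in>V. (m - ?A u) * Q u b) = 0" .
    have nng: "\<And>u. u \<in> V \<Longrightarrow> 0 \<le> (m - ?A u) * Q u b" using le nn ab(2) by simp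
    have "\<forall>u\<in>V. (m - ?A u) * Q u b = 0"
      using sum_nonneg_eq_0_iff[OF fin, of "\<lambda>u. (m - ?A u) * Q u b", OF nng] s0 by blast
    then have "(m - ?A a) * Q a b = 0" using ab(1) by blast
    then show ?thesis using ab(4) by simp
  qed
  show ?thesis
  proof (cases "\<exists>w\<in>V. ?A w < m")
    case False
    then have "?A s = m" "?A t = m" using le sV tV by (meson not_less order_antisym)+
    then show ?thesis by simp
  next
    case True
    then obtain w where wV: "w \<in> V" and Aw: "?A w < m" by blast
    have "(\<Prod>u\<in>V-{r}. Q u (p u)) = 0" if p: "p \<in> FF V r" for p
    proof -
      have pE: "p \<in> V \<rightarrow>\<^sub>E V" and pr: "reach p V r" using p by (auto simp: FF_def)
      obtain k where "(p^^k) w = r" using pr wV unfolding reach_def by blast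
      then have "?A ((p^^k) w) = m" using Ar by simp
      moreover have "\<not> ?A ((p^^0) w) = m" using Aw by simp
      ultimately obtain i where i1: "\<not> ?A ((p^^i) w) = m" and i2: "?A ((p^^Suc i) w) = m"
        using crossing[of "\<lambda>x. ?A x = m" p w k] by blast
      define a where "a = (p^^i) w"
      have aV: "a \<in> V" unfolding a_def by (rule funpow_in[OF pE wV])
      have ar: "a \<noteq> r" using i1 Ar unfolding a_def by auto
      have paV: "p a \<in> V" using pE aV by auto
      have "?A (p a) = m" using i2 unfolding a_def by simp
      moreover have "?A a < m" using le[OF aV] i1 unfolding a_def by simp
      ultimately have "Q a (p a) = 0" using zero[OF aV paV] by blast
      moreover have "a \<in> V - {r}" using aV ar by blast
      ultimately show ?thesis using fin by (meson finite_Diff prod_zero_iff)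
    qed
    then have "?A r = 0" unfolding AA_def by simp
    then have m0: "m = 0" using Ar by simp
    have "?A s = 0" "?A t = 0" using le[OF sV] le[OF tV] Anng m0 by (meson order_antisym)+
    then show ?thesis by simp
  qed
qed




definition EE :: "nat set \<Rightarrow> nat \<Rightarrow> (nat\<Rightarrow>nat) \<Rightarrow> nat set set" where
  "EE V j \<phi> = (\<lambda>c. {c, \<phi> c}) ` (V - {j})"

lemma funpow_fix: "f t = t \<Longrightarrow> (f^^n) t = t"
  by (induction n) auto

lemma fixpt_stay:
  assumes "f t = t" "(f^^i) u = t" "i \<le> k"
  shows "(f^^k) u = t"
proof -
  have "(f^^k) u = (f^^((k-i)+i)) u" using assms(3) by simp
  also have "\<dots> = (f^^(k-i)) ((f^^i) u)" by (simp only: funpow_add comp_apply)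
  finally have "(f^^k) u = (f^^(k-i)) ((f^^i) u)" .
  then show ?thesis using assms(2) funpow_fix[of f t "k-i", OF assms(1)] by simp
qed

lemma FF_in: "\<phi> \<in> FF V j \<Longrightarrow> d \<in> V \<Longrightarrow> \<phi> d \<in> V"
  unfolding FF_def by auto

lemma FF_no_fix:
  assumes "\<phi> \<in> FF V j" "d \<in> V" "d \<noteq> j"
  shows "\<phi> d \<noteq> d"
proof
  assume fx: "\<phi> d = d"
  obtain k where "(\<phi>^^k) d = j" using assms unfolding FF_def reach_def by blast
  then show False using funpow_fix[of \<phi> d k, OF fx] assms(3) by simp
qed

lemma FF_no2:
  assumes "\<phi> \<in> FF V j" "d \<in> V" "d \<noteq> j"
  shows "\<phi> (\<phi> d) \<noteq> d"
proof
  assume c2: "\<phi> (\<phi> d) = d"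
  have orb: "(\<phi>^^k) d = d \<or> (\<phi>^^k) d = \<phi> d" for k
    by (induction k) (use c2 in auto)
  obtain k where "(\<phi>^^k) d = j" using assms unfolding FF_def reach_def by blast
  then have "\<phi> d = j" using orb[of k] assms(3) by auto
  moreover have "\<phi> j = j" using assms(1) by (simp add: FF_def)
  ultimately show False using c2 assms(3) by simp
qed

lemma RA3:
  assumes agree: "\<And>x. x \<noteq> t \<Longrightarrow> x \<noteq> z \<Longrightarrow> h x = f x"
  shows "(f^^k) u = t \<Longrightarrow> (\<forall>i\<le>k. (f^^i) u \<noteq> z) \<Longrightarrow> \<exists>k'\<le>k. (h^^k') u = t"
proof (induction k arbitrary: u)
  case 0
  then show ?case by simp
next
  case (Suc k)
  show ?case
  proof (cases "u = t")
    case True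
    then show ?thesis by (intro exI[of _ 0]) simp
  next
    case False
    have uz: "u \<noteq> z" using Suc.prems(2) by (metis funpow_0 zero_le)
    have "(f^^k) (f u) = t" using Suc.prems(1) by (simp add: funpow_Suc_right del: funpow.simps)
    moreover have "\<forall>i\<le>k. (f^^i) (f u) \<noteq> z"
    proof (intro allI impI)
      fix i assume "i \<le> k"
      then have "Suc i \<le> Suc k" by simp
      then have "(f^^(Suc i)) u \<noteq> z" using Suc.prems(2) by blast
      then show "(f^^i) (f u) \<noteq> z" by (simp add: funpow_Suc_right del: funpow.simps)
    qed
    ultimately obtain k' where k': "k' \<le> k" "(h^^k') (f u) = t" using Suc.IH by blast
    then have "(h^^(Suc k')) u = t" using agree[OF False uz] by (simp add: funpow_Suc_right del: funpow.simps)
    then show ?thesis using k'(1) by (intro exI[of _ "Suc k'"]) simp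
  qed
qed

lemma reroot_step:
  assumes phi: "\<phi> \<in> FF V j" and cV: "c \<in> V" and cj: "c \<noteq> j" and pc: "\<phi> c = j"
  defines "\<psi> \<equiv> \<phi>(j:=c, c:=c)"
  shows "\<psi> \<in> FF V c" "EE V c \<psi> = EE V j \<phi>"
proof -
  have pE: "\<phi> \<in> V \<rightarrow>\<^sub>E V" and pj: "\<phi> j = j" and pr: "reach \<phi> V j" using phi by (auto simp: FF_def)
  have jV: "j \<in> V" using pE cV pc by auto
  have "\<psi> \<in> V \<rightarrow>\<^sub>E V" using pE cV jV unfolding \<psi>_def by (auto simp: PiE_def extensional_def)
  moreover have "\<psi> c = c" unfolding \<psi>_def by simp
  moreover have "reach \<psi> V c"
    unfolding reach_def
  proof
    fix d assume "d \<in> V"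
    then obtain k where k: "(\<phi>^^k) d = j" using pr unfolding reach_def by blast
    have "\<exists>k'. (\<psi>^^k') d = c" if "(\<phi>^^k) d = j" for d
      using that
    proof (induction k arbitrary: d)
      case 0
      then have "d = j" by simp
      then have "(\<psi>^^1) d = c" unfolding \<psi>_def using cj by simp
      then show ?case by blast
    next
      case (Suc k)
      show ?case
      proof (cases "d = c \<or> d = j")
        case True
        then show ?thesis
        proof
          assume "d = c" then show ?thesis by (intro exI[of _ 0]) simp
        next
          assume "d = j"
          then have "(\<psi>^^1) d = c" unfolding \<psi>_def using cj by simp
          then show ?thesis by blast
        qed
      next
        case False
        then have "\<psi> d = \<phi> d" unfolding \<psi>_def by simp
        moreover have "(\<phi>^^k) (\<phi> d) = j" using Suc.prems by (simp add: funpow_Suc_right del: funpow.simps)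
        ultimately obtain k' where "(\<psi>^^k') (\<psi> d) = c" using Suc.IH by auto
        then have "(\<psi>^^(Suc k')) d = c" by (simp add: funpow_Suc_right del: funpow.simps)
        then show ?thesis by blast
      qed
    qed
    then show "\<exists>k. (\<psi>^^k) d = c" using k by blast
  qed
  ultimately show "\<psi> \<in> FF V c" by (simp add: FF_def)
  have V1: "V - {j} = insert c (V - {j, c})" using cV cj by blast
  have V2: "V - {c} = insert j (V - {j, c})" using jV cj by blast
  have "EE V j \<phi> = insert {c, j} ((\<lambda>d. {d, \<phi> d}) ` (V - {j, c}))"
    unfolding EE_def V1 image_insert pc ..
  also have "(\<lambda>d. {d, \<phi> d}) ` (V - {j, c}) = (\<lambda>d. {d, \<psi> d}) ` (V - {j, c})"
    by (rule image_cong) (auto simp: \<psi>_def)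
  also have "insert {c, j} ((\<lambda>d. {d, \<psi> d}) ` (V - {j, c})) = EE V c \<psi>"
    unfolding EE_def V2 image_insert using cj by (simp add: \<psi>_def insert_commute)
  finally show "EE V c \<psi> = EE V j \<phi>" by simp
qed

lemma reroot_k:
  assumes j'V: "j' \<in> V"
  shows "\<forall>\<phi> j. \<phi> \<in> FF V j \<longrightarrow> (\<phi>^^k) j' = j \<longrightarrow> (\<exists>\<psi>\<in>FF V j'. EE V j' \<psi> = EE V j \<phi>)"
proof (induction k rule: less_induct)
  case (less k)
  show ?case
  proof (intro allI impI)
    fix \<phi> j assume phi: "\<phi> \<in> FF V j" and kj: "(\<phi>^^k) j' = j"
    have pE: "\<phi> \<in> V \<rightarrow>\<^sub>E V" and pj: "\<phi> j = j" using phi by (auto simp: FF_def)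
    show "\<exists>\<psi>\<in>FF V j'. EE V j' \<psi> = EE V j \<phi>"
    proof (cases k)
      case 0
      then have "j' = j" using kj by simp
      then show ?thesis using phi by blast
    next
      case (Suc k0)
      define c where "c = (\<phi>^^k0) j'"
      have cV: "c \<in> V" unfolding c_def by (rule funpow_in[OF pE j'V])
      have pc: "\<phi> c = j" using kj Suc unfolding c_def by simp
      show ?thesis
      proof (cases "c = j")
        case True
        then have "(\<phi>^^k0) j' = j" unfolding c_def by simp
        then show ?thesis using less.IH[of k0] Suc phi by blast
      next
        case False
        define \<psi> where "\<psi> = \<phi>(j:=c, c:=c)"
        have psi: "\<psi> \<in> FF V c" "EE V c \<psi> = EE V j \<phi>"
          using reroot_step[OF phi cV False pc] unfolding \<psi>_def by auto
        have "\<forall>i\<le>k0. (\<phi>^^i) j' \<noteq> j"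
        proof (intro allI impI)
          fix i assume "i \<le> k0"
          show "(\<phi>^^i) j' \<noteq> j"
          proof
            assume "(\<phi>^^i) j' = j"
            then have "(\<phi>^^k0) j' = j" using fixpt_stay[of \<phi> j i j' k0] pj \<open>i \<le> k0\<close> by blast
            then show False using False unfolding c_def by simp
          qed
        qed
        moreover have "\<And>x. x \<noteq> c \<Longrightarrow> x \<noteq> j \<Longrightarrow> \<psi> x = \<phi> x" unfolding \<psi>_def by simp
        ultimately obtain k' where k': "k' \<le> k0" "(\<psi>^^k') j' = c"
          using RA3[of c j \<psi> \<phi> k0 j'] c_def by blast
        then have "k' < k" using Suc by simp
        then obtain \<chi> where "\<chi> \<in> FF V j'" "EE V j' \<chi> = EE V c \<psi>"
          using less.IH[of k'] psi(1) k'(2) by blast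
        then show ?thesis using psi(2) by auto
      qed
    qed
  qed
qed

lemma reroot:
  assumes "j' \<in> V" "\<phi> \<in> FF V j"
  shows "\<exists>\<psi>\<in>FF V j'. EE V j' \<psi> = EE V j \<phi>"
proof -
  obtain k where "(\<phi>^^k) j' = j" using assms unfolding FF_def reach_def by blast
  then show ?thesis using reroot_k[OF assms(1), of k] assms(2) by blast
qed

lemma EE_inj:
  assumes phi: "\<phi> \<in> FF V j" and psi: "\<psi> \<in> FF V j" and E: "EE V j \<phi> = EE V j \<psi>"
  shows "\<phi> = \<psi>"
proof
  fix c
  have pE: "\<phi> \<in> V \<rightarrow>\<^sub>E V" "\<psi> \<in> V \<rightarrow>\<^sub>E V" and pj: "\<phi> j = j" "\<psi> j = j"
    and pr: "reach \<psi> V j" using phi psi by (auto simp: FF_def)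
  show "\<phi> c = \<psi> c"
  proof (cases "c \<in> V - {j}")
    case False
    show ?thesis
    proof (cases "c = j")
      case True then show ?thesis using pj by simp
    next
      case False
      then have "c \<notin> V" using \<open>c \<notin> V - {j}\<close> by blast
      then show ?thesis using PiE_arb[OF pE(1)] PiE_arb[OF pE(2)] by simp
    qed
  next
    case cV: True
    show ?thesis
    proof (rule ccontr)
      assume ne: "\<phi> c \<noteq> \<psi> c"
      define D where "D d \<longleftrightarrow> d \<in> V - {j} \<and> \<phi> d \<noteq> \<psi> d" for d
      have step: "D (\<psi> d)" if Dd: "D d" for d
      proof -
        have dV: "d \<in> V" "d \<noteq> j" "\<phi> d \<noteq> \<psi> d" using Dd unfolding D_def by auto
        have "{d, \<psi> d} \<in> EE V j \<psi>" unfolding EE_def using dV by blast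
        then have "{d, \<psi> d} \<in> (\<lambda>c. {c, \<phi> c}) ` (V - {j})" using E unfolding EE_def by simp
        then obtain e where eV: "e \<in> V - {j}" and eq: "{d, \<psi> d} = {e, \<phi> e}" by blast
        have "\<psi> d = e \<and> \<phi> e = d"
          using eq dV(3) unfolding doubleton_eq_iff by auto
        then have e1: "\<psi> d = e" and e2: "\<phi> e = d" by auto
        have "\<phi> e \<noteq> \<psi> e"
        proof
          assume "\<phi> e = \<psi> e"
          then have "\<psi> (\<psi> d) = d" using e1 e2 by simp
          then show False using FF_no2[OF psi dV(1,2)] by simp
        qed
        then show ?thesis unfolding D_def using eV e1 by simp
      qed
      have all: "D ((\<psi>^^k) c)" for k
      proof (induction k)
        case 0 then show ?case using cV ne unfolding D_def by simp
      next
        case (Suc k) then show ?case using step by simp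
      qed
      obtain k where "(\<psi>^^k) c = j" using pr cV unfolding reach_def by blast
      then show False using all[of k] unfolding D_def by simp
    qed
  qed
qed

lemma e_bij:
  assumes phi: "\<phi> \<in> FF V j"
  shows "bij_betw (\<lambda>c. {c, \<phi> c}) (V - {j}) (EE V j \<phi>)"
  unfolding bij_betw_def EE_def
proof
  show "inj_on (\<lambda>c. {c, \<phi> c}) (V - {j})"
  proof (rule inj_onI)
    fix c d assume c: "c \<in> V - {j}" and d: "d \<in> V - {j}" and eq: "{c, \<phi> c} = {d, \<phi> d}"
    show "c = d"
    proof (rule ccontr)
      assume "c \<noteq> d"
      then have "c = \<phi> d" "\<phi> c = d" using eq unfolding doubleton_eq_iff by auto
      then have "\<phi> (\<phi> c) = c" by simp
      then show False using FF_no2[OF phi] c by blast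
    qed
  qed
qed simp

lemma ext_perm:
  assumes f: "bij_betw f (V - {a}) (V - {b})" and aV: "a \<in> V" and bV: "b \<in> V"
  defines "\<sigma> \<equiv> (\<lambda>x. if x = a then b else if x \<in> V then f x else x)"
  shows "\<sigma> permutes V"
proof (rule bij_imp_permutes)
  show "\<And>x. x \<notin> V \<Longrightarrow> \<sigma> x = x" unfolding \<sigma>_def using aV by auto
  have fi: "inj_on f (V - {a})" and fim: "f ` (V - {a}) = V - {b}" using f by (auto simp: bij_betw_def)
  have inj: "inj_on \<sigma> V"
  proof (rule inj_onI)
    fix x y assume x: "x \<in> V" and y: "y \<in> V" and eq: "\<sigma> x = \<sigma> y"
    show "x = y"
    proof (cases "x = a")
      case True
      show ?thesis
      proof (rule ccontr)
        assume "x \<noteq> y"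
        then have "y \<in> V - {a}" using y True by blast
        then have "f y \<in> V - {b}" using fim by blast
        moreover have "f y = b" using eq True \<open>x \<noteq> y\<close> y unfolding \<sigma>_def by auto
        ultimately show False by blast
      qed
    next
      case xa: False
      show ?thesis
      proof (cases "y = a")
        case True
        have "x \<in> V - {a}" using x xa by blast
        then have "f x \<in> V - {b}" using fim by blast
        moreover have "f x = b" using eq True xa x unfolding \<sigma>_def by auto
        ultimately show ?thesis by blast
      next
        case False
        then have "f x = f y" using eq xa x y unfolding \<sigma>_def by auto
        then show ?thesis using fi x y xa False by (auto dest: inj_onD)
      qed
    qed
  qed
  have "\<sigma> ` V = V"
  proof
    show "\<sigma> ` V \<subseteq> V"
    proof
      fix y assume "y \<in> \<sigma> ` V"
      then obtain x where x: "x \<in> V" "y = \<sigma> x" by blast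
      show "y \<in> V"
      proof (cases "x = a")
        case True then show ?thesis using x bV unfolding \<sigma>_def by simp
      next
        case False
        then have "f x \<in> V - {b}" using fim x by blast
        then show ?thesis using x False unfolding \<sigma>_def by simp
      qed
    qed
  next
    show "V \<subseteq> \<sigma> ` V"
    proof
      fix y assume y: "y \<in> V"
      show "y \<in> \<sigma> ` V"
      proof (cases "y = b")
        case True
        then have "\<sigma> a = y" unfolding \<sigma>_def by simp
        then show ?thesis using aV by blast
      next
        case False
        then have "y \<in> f ` (V - {a})" using fim y by blast
        then obtain x where x: "x \<in> V - {a}" "y = f x" by blast
        then have "\<sigma> x = y" unfolding \<sigma>_def by simp
        then show ?thesis using x by blast
      qed
    qed
  qed
  then show "bij_betw \<sigma> V V" using inj by (simp add: bij_betw_def)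
qed




definition SS :: "nat set \<Rightarrow> nat \<Rightarrow> nat \<Rightarrow> (nat\<Rightarrow>nat) set" where
  "SS V r j = {\<pi>. \<pi> permutes V \<and> \<pi> r = j}"

definition Gf :: "nat set \<Rightarrow> nat \<Rightarrow> (nat\<Rightarrow>nat\<Rightarrow>real) \<Rightarrow> nat \<Rightarrow> (nat\<Rightarrow>nat) \<Rightarrow> real" where
  "Gf V r x j \<phi> = (\<Sum>\<pi>\<in>SS V r j. \<Prod>u\<in>V-{r}. x u (\<pi> u) * x u (\<phi> (\<pi> u)))"

definition conjg :: "nat set \<Rightarrow> (nat\<Rightarrow>nat) \<Rightarrow> (nat\<Rightarrow>nat) \<Rightarrow> (nat\<Rightarrow>nat)" where
  "conjg V \<sigma> p = restrict (\<sigma> \<circ> p \<circ> inv \<sigma>) V"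

lemma conj_app: "\<sigma> permutes V \<Longrightarrow> u \<in> V \<Longrightarrow> conjg V \<sigma> p (\<sigma> u) = \<sigma> (p u)"
  unfolding conjg_def by (simp add: permutes_in_image permutes_inverses)

lemma conj_FF:
  assumes sg: "\<sigma> permutes V" and p: "p \<in> FF V r" and rV: "r \<in> V"
  shows "conjg V \<sigma> p \<in> FF V (\<sigma> r)"
proof -
  have isg: "inv \<sigma> permutes V" using permutes_inv[OF sg] .
  have pE: "p \<in> V \<rightarrow>\<^sub>E V" and pr: "p r = r" and prr: "reach p V r" using p by (auto simp: FF_def)
  have "conjg V \<sigma> p \<in> V \<rightarrow>\<^sub>E V"
  proof
    fix c assume c: "c \<in> V"
    then have "inv \<sigma> c \<in> V" using isg by (simp add: permutes_in_image)
    then have "p (inv \<sigma> c) \<in> V" using pE by auto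
    then show "conjg V \<sigma> p c \<in> V" using c sg by (simp add: conjg_def permutes_in_image)
  next
    fix c assume "c \<notin> V" then show "conjg V \<sigma> p c = undefined" by (simp add: conjg_def)
  qed
  moreover have "conjg V \<sigma> p (\<sigma> r) = \<sigma> r" using conj_app[OF sg rV] pr by simp
  moreover have "reach (conjg V \<sigma> p) V (\<sigma> r)"
    unfolding reach_def
  proof
    fix c assume c: "c \<in> V"
    have it: "((conjg V \<sigma> p)^^k) c = \<sigma> ((p^^k) (inv \<sigma> c))" for k
    proof (induction k)
      case 0 then show ?case by (simp add: permutes_inverses[OF sg])
    next
      case (Suc k)
      have "inv \<sigma> c \<in> V" using c isg by (simp add: permutes_in_image)
      then have "(p^^k) (inv \<sigma> c) \<in> V" by (rule funpow_in[OF pE])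
      then show ?case using Suc conj_app[OF sg] by simp
    qed
    have "inv \<sigma> c \<in> V" using c isg by (simp add: permutes_in_image)
    then obtain k where "(p^^k) (inv \<sigma> c) = r" using prr unfolding reach_def by blast
    then show "\<exists>k. ((conjg V \<sigma> p)^^k) c = \<sigma> r" using it by metis
  qed
  ultimately show ?thesis by (simp add: FF_def)
qed

lemma conj_inv:
  assumes sg: "\<sigma> permutes V" and pE: "p \<in> V \<rightarrow>\<^sub>E V"
  shows "conjg V (inv \<sigma>) (conjg V \<sigma> p) = p"
proof
  fix c
  show "conjg V (inv \<sigma>) (conjg V \<sigma> p) c = p c"
  proof (cases "c \<in> V")
    case True
    have ii: "inv (inv \<sigma>) = \<sigma>" using permutes_bij[OF sg] by (simp add: inv_inv_eq)
    have "\<sigma> c \<in> V" using True sg by (simp add: permutes_in_image)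
    then have "conjg V \<sigma> p (\<sigma> c) = \<sigma> (p c)" using conj_app[OF sg True] by simp
    then show ?thesis using True ii \<open>\<sigma> c \<in> V\<close> unfolding conjg_def[of V "inv \<sigma>"]
      by (simp add: permutes_inverses[OF sg])
  next
    case False
    then show ?thesis using PiE_arb[OF pE False] by (simp add: conjg_def)
  qed
qed

lemma conj_sum:
  fixes x :: "nat \<Rightarrow> nat \<Rightarrow> real"
  assumes pi: "\<pi> \<in> SS V r j" and rV: "r \<in> V"
  shows "(\<Sum>p\<in>FF V r. \<Prod>u\<in>V-{r}. x u (\<pi> u) * x u (\<pi> (p u)))
       = (\<Sum>\<phi>\<in>FF V j. \<Prod>u\<in>V-{r}. x u (\<pi> u) * x u (\<phi> (\<pi> u)))"
proof -
  have pp: "\<pi> permutes V" and pr: "\<pi> r = j" using pi by (auto simp: SS_def)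
  have ipp: "inv \<pi> permutes V" using permutes_inv[OF pp] .
  have ii: "inv (inv \<pi>) = \<pi>" using permutes_bij[OF pp] by (simp add: inv_inv_eq)
  have jV: "j \<in> V" using pr rV pp by (auto simp: permutes_in_image)
  have ipj: "inv \<pi> j = r" using pr by (simp add: permutes_inv_eq[OF pp])
  show ?thesis
  proof (rule sum.reindex_bij_witness[where i="conjg V (inv \<pi>)" and j="conjg V \<pi>"])
    fix a assume a: "a \<in> FF V r"
    then have aE: "a \<in> V \<rightarrow>\<^sub>E V" by (simp add: FF_def)
    show "conjg V (inv \<pi>) (conjg V \<pi> a) = a" by (rule conj_inv[OF pp aE])
    show "conjg V \<pi> a \<in> FF V j" using conj_FF[OF pp a rV] pr by simp
    show "(\<Prod>u\<in>V-{r}. x u (\<pi> u) * x u (conjg V \<pi> a (\<pi> u))) = (\<Prod>u\<in>V-{r}. x u (\<pi> u) * x u (\<pi> (a u)))"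
      by (rule prod.cong) (auto simp: conj_app[OF pp])
  next
    fix b assume b: "b \<in> FF V j"
    then have bE: "b \<in> V \<rightarrow>\<^sub>E V" by (simp add: FF_def)
    show "conjg V \<pi> (conjg V (inv \<pi>) b) = b" using conj_inv[OF ipp bE] ii by simp
    show "conjg V (inv \<pi>) b \<in> FF V r" using conj_FF[OF ipp b jV] ipj by simp
  qed
qed

lemma prod_pair: "a \<noteq> b \<Longrightarrow> (\<Prod>c\<in>{a,b}. (f c :: real)) = f a * f b"
  by simp

lemma G_eq:
  fixes x :: "nat \<Rightarrow> nat \<Rightarrow> real"
  assumes phi: "\<phi> \<in> FF V j" and psi: "\<psi> \<in> FF V j'" and E: "EE V j \<phi> = EE V j' \<psi>"
    and jV: "j \<in> V" and j'V: "j' \<in> V"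
  shows "Gf V r x j \<phi> = Gf V r x j' \<psi>"
proof -
  let ?e1 = "\<lambda>c. {c, \<phi> c}" and ?e2 = "\<lambda>c. {c, \<psi> c}"
  let ?Y = "\<lambda>u e. \<Prod>c\<in>e. x u c"
  have b1: "bij_betw ?e1 (V - {j}) (EE V j' \<psi>)" using e_bij[OF phi] E by simp
  have b2: "bij_betw ?e2 (V - {j'}) (EE V j' \<psi>)" using e_bij[OF psi] .
  define f0 where "f0 = inv_into (V - {j'}) ?e2 \<circ> ?e1"
  have bf0: "bij_betw f0 (V - {j}) (V - {j'})"
    unfolding f0_def by (rule bij_betw_trans[OF b1 bij_betw_inv_into[OF b2]])
  define \<sigma> where "\<sigma> = (\<lambda>x. if x = j then j' else if x \<in> V then f0 x else x)"
  have sg: "\<sigma> permutes V" unfolding \<sigma>_def by (rule ext_perm[OF bf0 jV j'V])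
  have sj: "\<sigma> j = j'" unfolding \<sigma>_def by simp
  have es: "?e2 (\<sigma> c) = ?e1 c" if c: "c \<in> V - {j}" for c
  proof -
    have "?e1 c \<in> ?e2 ` (V - {j'})" using b1 b2 c by (auto simp: bij_betw_def)
    then have "?e2 (inv_into (V - {j'}) ?e2 (?e1 c)) = ?e1 c" by (rule f_inv_into_f)
    then show ?thesis using c unfolding \<sigma>_def f0_def by simp
  qed
  have rw1: "Gf V r x j \<phi> = (\<Sum>\<pi>\<in>SS V r j. \<Prod>u\<in>V-{r}. ?Y u (?e1 (\<pi> u)))"
    unfolding Gf_def
  proof (rule sum.cong[OF refl], rule prod.cong[OF refl])
    fix \<pi> u assume pi: "\<pi> \<in> SS V r j" and u: "u \<in> V - {r}"
    have pp: "\<pi> permutes V" and pr: "\<pi> r = j" using pi by (auto simp: SS_def)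
    have "\<pi> u \<in> V" using u pp by (simp add: permutes_in_image)
    moreover have "\<pi> u \<noteq> j" using u pr permutes_inj[OF pp] by (metis DiffE inj_eq singletonI)
    ultimately have "\<phi> (\<pi> u) \<noteq> \<pi> u" using FF_no_fix[OF phi] by blast
    then show "x u (\<pi> u) * x u (\<phi> (\<pi> u)) = ?Y u (?e1 (\<pi> u))" by (simp add: prod_pair)
  qed
  have rw2: "Gf V r x j' \<psi> = (\<Sum>\<pi>\<in>SS V r j'. \<Prod>u\<in>V-{r}. ?Y u (?e2 (\<pi> u)))"
    unfolding Gf_def
  proof (rule sum.cong[OF refl], rule prod.cong[OF refl])
    fix \<pi> u assume pi: "\<pi> \<in> SS V r j'" and u: "u \<in> V - {r}"
    have pp: "\<pi> permutes V" and pr: "\<pi> r = j'" using pi by (auto simp: SS_def)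
    have "\<pi> u \<in> V" using u pp by (simp add: permutes_in_image)
    moreover have "\<pi> u \<noteq> j'" using u pr permutes_inj[OF pp] by (metis DiffE inj_eq singletonI)
    ultimately have "\<psi> (\<pi> u) \<noteq> \<pi> u" using FF_no_fix[OF psi] by blast
    then show "x u (\<pi> u) * x u (\<psi> (\<pi> u)) = ?Y u (?e2 (\<pi> u))" by (simp add: prod_pair)
  qed
  have isg: "inv \<sigma> permutes V" using permutes_inv[OF sg] .
  have "(\<Sum>\<pi>\<in>SS V r j. \<Prod>u\<in>V-{r}. ?Y u (?e1 (\<pi> u))) = (\<Sum>\<pi>\<in>SS V r j'. \<Prod>u\<in>V-{r}. ?Y u (?e2 (\<pi> u)))"
  proof (rule sum.reindex_bij_witness[where i="\<lambda>\<pi>. inv \<sigma> \<circ> \<pi>" and j="\<lambda>\<pi>. \<sigma> \<circ> \<pi>"])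
    fix a assume a: "a \<in> SS V r j"
    have ap: "a permutes V" and ar: "a r = j" using a by (auto simp: SS_def)
    show "inv \<sigma> \<circ> (\<sigma> \<circ> a) = a" by (simp add: o_assoc permutes_inv_o[OF sg])
    show "\<sigma> \<circ> a \<in> SS V r j'" using permutes_compose[OF ap sg] ar sj by (simp add: SS_def)
    show "(\<Prod>u\<in>V-{r}. ?Y u (?e2 ((\<sigma> \<circ> a) u))) = (\<Prod>u\<in>V-{r}. ?Y u (?e1 (a u)))"
    proof (rule prod.cong[OF refl])
      fix u assume u: "u \<in> V - {r}"
      have "a u \<in> V" using u ap by (simp add: permutes_in_image)
      moreover have "a u \<noteq> j" using u ar permutes_inj[OF ap] by (metis DiffE inj_eq singletonI)
      ultimately have "?e2 (\<sigma> (a u)) = ?e1 (a u)" using es by blast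
      then show "?Y u (?e2 ((\<sigma> \<circ> a) u)) = ?Y u (?e1 (a u))" by simp
    qed
  next
    fix b assume b: "b \<in> SS V r j'"
    have bp: "b permutes V" and br: "b r = j'" using b by (auto simp: SS_def)
    show "\<sigma> \<circ> (inv \<sigma> \<circ> b) = b" by (simp add: o_assoc permutes_inv_o[OF sg])
    have "inv \<sigma> j' = j" using sj by (simp add: permutes_inv_eq[OF sg])
    then show "inv \<sigma> \<circ> b \<in> SS V r j" using permutes_compose[OF bp isg] br by (simp add: SS_def)
  qed
  then show ?thesis using rw1 rw2 by simp
qed

definition RR :: "nat set \<Rightarrow> nat \<Rightarrow> nat \<Rightarrow> (nat\<Rightarrow>nat) \<Rightarrow> (nat\<Rightarrow>nat)" where
  "RR V a b \<phi> = (SOME \<psi>. \<psi> \<in> FF V b \<and> EE V b \<psi> = EE V a \<phi>)"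

lemma RR_prop:
  assumes "\<phi> \<in> FF V a" "b \<in> V"
  shows "RR V a b \<phi> \<in> FF V b \<and> EE V b (RR V a b \<phi>) = EE V a \<phi>"
proof -
  have "\<exists>\<psi>. \<psi> \<in> FF V b \<and> EE V b \<psi> = EE V a \<phi>" using reroot[OF assms(2,1)] by blast
  then show ?thesis unfolding RR_def by (rule someI_ex)
qed

lemma RR_inv:
  assumes "\<phi> \<in> FF V a" "a \<in> V" "b \<in> V"
  shows "RR V b a (RR V a b \<phi>) = \<phi>"
proof -
  have 1: "RR V a b \<phi> \<in> FF V b" "EE V b (RR V a b \<phi>) = EE V a \<phi>" using RR_prop[OF assms(1,3)] by auto
  have 2: "RR V b a (RR V a b \<phi>) \<in> FF V a" "EE V a (RR V b a (RR V a b \<phi>)) = EE V b (RR V a b \<phi>)"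
    using RR_prop[OF 1(1) assms(2)] by auto
  show ?thesis using EE_inj[OF 2(1) assms(1)] 1(2) 2(2) by simp
qed

lemma C_indep:
  fixes x :: "nat \<Rightarrow> nat \<Rightarrow> real"
  assumes fin: "finite V" and rV: "r \<in> V" and jV: "j \<in> V" and j'V: "j' \<in> V"
  shows "(\<Sum>\<pi>\<in>SS V r j. \<Sum>p\<in>FF V r. \<Prod>u\<in>V-{r}. x u (\<pi> u) * x u (\<pi> (p u)))
       = (\<Sum>\<pi>\<in>SS V r j'. \<Sum>p\<in>FF V r. \<Prod>u\<in>V-{r}. x u (\<pi> u) * x u (\<pi> (p u)))"
proof -
  have C: "(\<Sum>\<pi>\<in>SS V r a. \<Sum>p\<in>FF V r. \<Prod>u\<in>V-{r}. x u (\<pi> u) * x u (\<pi> (p u)))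
         = (\<Sum>\<phi>\<in>FF V a. Gf V r x a \<phi>)" for a
  proof -
    have "(\<Sum>\<pi>\<in>SS V r a. \<Sum>p\<in>FF V r. \<Prod>u\<in>V-{r}. x u (\<pi> u) * x u (\<pi> (p u)))
        = (\<Sum>\<pi>\<in>SS V r a. \<Sum>\<phi>\<in>FF V a. \<Prod>u\<in>V-{r}. x u (\<pi> u) * x u (\<phi> (\<pi> u)))"
      by (rule sum.cong[OF refl]) (rule conj_sum[OF _ rV])
    also have "\<dots> = (\<Sum>\<phi>\<in>FF V a. Gf V r x a \<phi>)"
      unfolding Gf_def by (rule sum.swap)
    finally show ?thesis .
  qed
  have "(\<Sum>\<phi>\<in>FF V j. Gf V r x j \<phi>) = (\<Sum>\<psi>\<in>FF V j'. Gf V r x j' \<psi>)"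
  proof (rule sum.reindex_bij_witness[where i="RR V j' j" and j="RR V j j'"])
    fix a assume a: "a \<in> FF V j"
    show "RR V j' j (RR V j j' a) = a" by (rule RR_inv[OF a jV j'V])
    have p: "RR V j j' a \<in> FF V j'" "EE V j' (RR V j j' a) = EE V j a" using RR_prop[OF a j'V] by auto
    show "RR V j j' a \<in> FF V j'" using p(1) .
    show "Gf V r x j' (RR V j j' a) = Gf V r x j a"
      using G_eq[OF a p(1) p(2)[symmetric] jV j'V] by simp
  next
    fix b assume b: "b \<in> FF V j'"
    show "RR V j j' (RR V j' j b) = b" by (rule RR_inv[OF b j'V jV])
    show "RR V j' j b \<in> FF V j" using RR_prop[OF b jV] by auto
  qed
  then show ?thesis using C[of j] C[of j'] by simp
qed




lemma P_poly_AA: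
  assumes "r \<in> {1..n}"
  shows "P_poly n r \<pi> x = (\<Prod>u\<in>{1..n}. x u (\<pi> u)) * AA {1..n} (\<lambda>u v. x u (\<pi> v)) r"
  unfolding P_poly_def AA_def using arb_sum[OF assms, of "\<lambda>u v. x u (\<pi> v)"] by simp

lemma P_poly_K:
  fixes x :: "nat \<Rightarrow> nat \<Rightarrow> real"
  assumes nge: "n \<ge> 1" and rV: "r \<in> {1..n}" and iV: "i \<in> {1..n}" and ds: "doubly_stochastic n x"
    and pp: "\<pi> permutes {1..n}"
  shows "P_poly n r \<pi> x = x i (\<pi> i) *
     (\<Sum>p\<in>FF {1..n} i. \<Prod>u\<in>{1..n}-{i}. x u (\<pi> u) * x u (\<pi> (p u)))"
proof -
  let ?V = "{1..n::nat}"
  let ?Q = "\<lambda>u v. x u (\<pi> v)"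
  have nn: "\<forall>u\<in>?V. \<forall>v\<in>?V. ?Q u v \<ge> 0"
  proof (intro ballI)
    fix u v assume "u \<in> ?V" "v \<in> ?V"
    moreover then have "\<pi> v \<in> ?V" using permutes_in_image[OF pp, THEN iffD2] by blast
    ultimately show "?Q u v \<ge> 0" using ds unfolding doubly_stochastic_def by blast
  qed
  have rs: "\<forall>u\<in>?V. (\<Sum>v\<in>?V. ?Q u v) = 1"
  proof
    fix u assume u: "u \<in> ?V"
    have "(\<Sum>v\<in>?V. ?Q u v) = (\<Sum>c\<in>\<pi> ` ?V. x u c)"
      using sum.reindex[OF permutes_inj_on[OF pp], of "x u"] by (simp add: comp_def)
    also have "\<dots> = (\<Sum>c\<in>?V. x u c)" using permutes_image[OF pp] by simp
    also have "\<dots> = 1" using ds u unfolding doubly_stochastic_def by blast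
    finally show "(\<Sum>v\<in>?V. ?Q u v) = 1" .
  qed
  have cs: "\<forall>v\<in>?V. (\<Sum>u\<in>?V. ?Q u v) = 1"
  proof
    fix v assume "v \<in> ?V"
    then have "\<pi> v \<in> ?V" using permutes_in_image[OF pp, THEN iffD2] by blast
    then show "(\<Sum>u\<in>?V. ?Q u v) = 1" using ds unfolding doubly_stochastic_def by blast
  qed
  have "AA ?V ?Q r = AA ?V ?Q i" by (rule root_indep[OF _ nn rs cs rV iV]) simp
  then have "P_poly n r \<pi> x = (\<Prod>u\<in>?V. x u (\<pi> u)) * AA ?V ?Q i" using P_poly_AA[OF rV] by simp
  also have "\<dots> = x i (\<pi> i) * ((\<Prod>u\<in>?V-{i}. x u (\<pi> u)) * AA ?V ?Q i)"
    using prod.remove[of ?V i "\<lambda>u. x u (\<pi> u)"] iV by simp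
  also have "(\<Prod>u\<in>?V-{i}. x u (\<pi> u)) * AA ?V ?Q i
      = (\<Sum>p\<in>FF ?V i. \<Prod>u\<in>?V-{i}. x u (\<pi> u) * x u (\<pi> (p u)))"
    unfolding AA_def sum_distrib_left by (simp add: prod.distrib)
  finally show ?thesis .
qed

theorem proposition3p5:
  fixes n r :: nat and x :: "nat \<Rightarrow> nat \<Rightarrow> real"
  assumes "n \<ge> 1" and "r \<in> {1..n}" and "doubly_stochastic n x"
  shows "\<forall>i\<in>{1..n}. \<forall>j\<in>{1..n}.
           (\<Sum>\<pi>\<in>{\<pi>. \<pi> permutes {1..n}}. (perm_matrix \<pi> i j - x i j) * P_poly n r \<pi> x) = 0"
proof (intro ballI)
  fix i j assume iV: "i \<in> {1..n}" and jV: "j \<in> {1..n}"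
  let ?V = "{1..n::nat}"
  let ?S = "{\<pi>. \<pi> permutes ?V}"
  define K where "K \<pi> = (\<Sum>p\<in>FF ?V i. \<Prod>u\<in>?V-{i}. x u (\<pi> u) * x u (\<pi> (p u)))" for \<pi>
  define C where "C c = (\<Sum>\<pi>\<in>SS ?V i c. K \<pi>)" for c
  have finS: "finite ?S" by (rule finite_permutations) simp
  have P: "P_poly n r \<pi> x = x i (\<pi> i) * K \<pi>" if "\<pi> \<in> ?S" for \<pi>
    using P_poly_K[OF assms(1,2) iV assms(3)] that unfolding K_def by simp
  have Cc: "C c = C j" if "c \<in> ?V" for c
    unfolding C_def K_def using C_indep[OF _ iV that jV, of x] by simp
  have SSeq: "SS ?V i c = {\<pi> \<in> ?S. \<pi> i = c}" for c by (auto simp: SS_def)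
  have part: "(\<Sum>\<pi>\<in>SS ?V i c. P_poly n r \<pi> x) = x i c * C c" for c
  proof -
    have "(\<Sum>\<pi>\<in>SS ?V i c. P_poly n r \<pi> x) = (\<Sum>\<pi>\<in>SS ?V i c. x i c * K \<pi>)"
      by (rule sum.cong[OF refl]) (auto simp: SS_def P)
    then show ?thesis unfolding C_def by (simp add: sum_distrib_left)
  qed
  have A: "(\<Sum>\<pi>\<in>?S. perm_matrix \<pi> i j * P_poly n r \<pi> x) = x i j * C j"
  proof -
    have "(\<Sum>\<pi>\<in>?S. perm_matrix \<pi> i j * P_poly n r \<pi> x)
        = (\<Sum>\<pi>\<in>?S. if \<pi> i = j then P_poly n r \<pi> x else 0)"
      by (rule sum.cong[OF refl]) (auto simp: perm_matrix_def)
    also have "\<dots> = (\<Sum>\<pi>\<in>{\<pi> \<in> ?S. \<pi> i = j}. P_poly n r \<pi> x)"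
      by (rule sum.inter_filter[OF finS, symmetric])
    also have "\<dots> = x i j * C j" using part[of j] SSeq[of j] by simp
    finally show ?thesis .
  qed
  have B: "(\<Sum>\<pi>\<in>?S. P_poly n r \<pi> x) = C j"
  proof -
    have img: "(\<lambda>\<pi>. \<pi> i) ` ?S \<subseteq> ?V"
    proof
      fix c assume "c \<in> (\<lambda>\<pi>. \<pi> i) ` ?S"
      then obtain \<pi> where pp: "\<pi> permutes ?V" and c: "c = \<pi> i" by blast
      show "c \<in> ?V" using permutes_in_image[OF pp, THEN iffD2, OF iV] c by simp
    qed
    have "(\<Sum>\<pi>\<in>?S. P_poly n r \<pi> x) = (\<Sum>c\<in>?V. \<Sum>\<pi>\<in>{\<pi> \<in> ?S. \<pi> i = c}. P_poly n r \<pi> x)"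
      by (rule sum.group[OF finS _ img, symmetric]) simp
    also have "\<dots> = (\<Sum>c\<in>?V. x i c * C j)"
    proof (rule sum.cong[OF refl])
      fix c assume c: "c \<in> ?V"
      have "(\<Sum>\<pi>\<in>{\<pi> \<in> ?S. \<pi> i = c}. P_poly n r \<pi> x) = (\<Sum>\<pi>\<in>SS ?V i c. P_poly n r \<pi> x)"
        by (simp only: SSeq)
      also have "\<dots> = x i c * C c" by (rule part)
      also have "\<dots> = x i c * C j" using Cc[OF c] by simp
      finally show "(\<Sum>\<pi>\<in>{\<pi> \<in> ?S. \<pi> i = c}. P_poly n r \<pi> x) = x i c * C j" .
    qed
    also have "\<dots> = C j" using assms(3) iV unfolding doubly_stochastic_def
      by (simp add: sum_distrib_right[symmetric])
    finally show ?thesis .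
  qed
  have "(\<Sum>\<pi>\<in>?S. (perm_matrix \<pi> i j - x i j) * P_poly n r \<pi> x)
      = (\<Sum>\<pi>\<in>?S. perm_matrix \<pi> i j * P_poly n r \<pi> x) - x i j * (\<Sum>\<pi>\<in>?S. P_poly n r \<pi> x)"
    by (simp add: algebra_simps sum_subtractf sum_distrib_left)
  also have "\<dots> = 0" using A B by simp
  finally show "(\<Sum>\<pi>\<in>?S. (perm_matrix \<pi> i j - x i j) * P_poly n r \<pi> x) = 0" .
qed


end
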